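(* Let $D$ be a commutative $k$-algebra satisfying the sensitive multiplicity condition, let $\sigma$ be an automorphism of $D$ which is not locally algebraic, and let $a\in D$. Then $\operatorname{GKdim}(D(\sigma,a))\geq \operatorname{GKdim}(D)+2$.
   Context: $k$ is a field. The generalized Weyl algebra $D(\sigma,a)$ (for $a$ central) is generated by $D$ and indeterminates $x,y$ with $xd=\sigma(d)x$, $yd=\sigma^{-1}(d)y$ ($d\in D$), $yx=a$, $xy=\sigma(a)$. $\operatorname{GKdim}(B)=\sup_V\limsup_{n\to\infty}\log_n\dim_k(\sum_{i=0}^nV^i)$. An element $r$ of an algebra $B$ is regular if $rb\neq0$ and $br\neq0$ for all $0\neq b\in B$. An algebra $B$ with $\operatorname{GKdim}(B)=d$ satisfies $\mathrm{SM}(V_0,c,d)$, for a finite-dimensional subspace $V_0\subseteq B$ and a constant $c>0$, if for every finite-dimensional subspace $W\subseteq B$ with $V_0r\subseteq W$ for some regular element $r\in B$ one has $\dim(W^m)\geq c\dim(W)m^d$ for all $m\in\mathbb{N}$ (here $W^0=k$). $B$ satisfies the sensitive multiplicity condition if it satisfies $\mathrm{SM}(V_0,c,d)$ for some such $V_0$ and $c$, where $d=\operatorname{GKdim}(B)$. An automorphism $\sigma$ is locally algebraic if every finite-dimensional subspace lies in a finite-dimensional $\sigma$-stable subspace. *)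

theory Defs
  imports Complex_Main "HOL-Library.Liminf_Limsup" "HOL-Library.Extended_Real"
begin

definition is_k_algebra :: "('k::field \<Rightarrow> 'b::ring_1 \<Rightarrow> 'b) \<Rightarrow> bool" where
  "is_k_algebra s \<longleftrightarrow> vector_space s \<and>
     (\<forall>c u v. s c (u * v) = s c u * v \<and> s c (u * v) = u * s c v)"

definition fd_subspace :: "('k::field \<Rightarrow> 'b::ring_1 \<Rightarrow> 'b) \<Rightarrow> 'b set \<Rightarrow> bool" where
  "fd_subspace s V \<longleftrightarrow> (\<exists>B. finite B \<and> V = module.span s B)"

definition sub_prod :: "('k::field \<Rightarrow> 'b::ring_1 \<Rightarrow> 'b) \<Rightarrow> 'b set \<Rightarrow> 'b set \<Rightarrow> 'b set" where
  "sub_prod s V W = module.span s {v * w | v w. v \<in> V \<and> w \<in> W}"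

fun sub_pow :: "('k::field \<Rightarrow> 'b::ring_1 \<Rightarrow> 'b) \<Rightarrow> 'b set \<Rightarrow> nat \<Rightarrow> 'b set" where
  "sub_pow s V 0 = module.span s {1}"
| "sub_pow s V (Suc n) = sub_prod s (sub_pow s V n) V"

definition sub_pow_sum :: "('k::field \<Rightarrow> 'b::ring_1 \<Rightarrow> 'b) \<Rightarrow> 'b set \<Rightarrow> nat \<Rightarrow> 'b set" where
  "sub_pow_sum s V n = module.span s (\<Union>i\<in>{0..n}. sub_pow s V i)"

definition GKdim :: "('k::field \<Rightarrow> 'b::ring_1 \<Rightarrow> 'b) \<Rightarrow> ereal" where
  "GKdim s = (SUP V \<in> {V. fd_subspace s V}.
      limsup (\<lambda>n. ereal (log (real n) (real (vector_space.dim s (sub_pow_sum s V n))))))"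

definition regular_elem :: "'b::ring_1 \<Rightarrow> bool" where
  "regular_elem r \<longleftrightarrow> (\<forall>b. b \<noteq> 0 \<longrightarrow> r * b \<noteq> 0 \<and> b * r \<noteq> 0)"

definition SM :: "('k::field \<Rightarrow> 'b::ring_1 \<Rightarrow> 'b) \<Rightarrow> 'b set \<Rightarrow> real \<Rightarrow> real \<Rightarrow> bool" where
  "SM s V0 c d \<longleftrightarrow> fd_subspace s V0 \<and> c > 0 \<and>
     (\<forall>W r. fd_subspace s W \<and> regular_elem r \<and> {v * r | v. v \<in> V0} \<subseteq> W \<longrightarrow>
        (\<forall>m::nat. real (vector_space.dim s (sub_pow s W m))
                   \<ge> c * real (vector_space.dim s W) * real m powr d))"

definition sensitive_multiplicity :: "('k::field \<Rightarrow> 'b::ring_1 \<Rightarrow> 'b) \<Rightarrow> bool" where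
  "sensitive_multiplicity s \<longleftrightarrow>
     (\<exists>d::real. GKdim s = ereal d \<and> (\<exists>V0 c. SM s V0 c d))"

definition k_alg_hom :: "('k::field \<Rightarrow> 'a::ring_1 \<Rightarrow> 'a) \<Rightarrow> ('k \<Rightarrow> 'b::ring_1 \<Rightarrow> 'b)
     \<Rightarrow> ('a \<Rightarrow> 'b) \<Rightarrow> bool" where
  "k_alg_hom s1 s2 f \<longleftrightarrow> Vector_Spaces.linear s1 s2 f \<and>
     (\<forall>u v. f (u * v) = f u * f v) \<and> f 1 = 1"

definition k_alg_automorphism :: "('k::field \<Rightarrow> 'a::ring_1 \<Rightarrow> 'a) \<Rightarrow> ('a \<Rightarrow> 'a) \<Rightarrow> bool" where
  "k_alg_automorphism s f \<longleftrightarrow> k_alg_hom s s f \<and> bij f"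

definition locally_algebraic :: "('k::field \<Rightarrow> 'a::ring_1 \<Rightarrow> 'a) \<Rightarrow> ('a \<Rightarrow> 'a) \<Rightarrow> bool" where
  "locally_algebraic s f \<longleftrightarrow>
     (\<forall>V. fd_subspace s V \<longrightarrow> (\<exists>W. fd_subspace s W \<and> V \<subseteq> W \<and> f ` W \<subseteq> W))"

definition subalgebra :: "('k::field \<Rightarrow> 'b::ring_1 \<Rightarrow> 'b) \<Rightarrow> 'b set \<Rightarrow> bool" where
  "subalgebra s S \<longleftrightarrow> module.subspace s S \<and> 1 \<in> S \<and> (\<forall>u\<in>S. \<forall>v\<in>S. u * v \<in> S)"

definition generates :: "('k::field \<Rightarrow> 'b::ring_1 \<Rightarrow> 'b) \<Rightarrow> 'b set \<Rightarrow> bool" where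
  "generates s G \<longleftrightarrow> (\<forall>S. subalgebra s S \<and> G \<subseteq> S \<longrightarrow> S = UNIV)"

definition gwa_mon :: "'b::ring_1 \<Rightarrow> 'b \<Rightarrow> int \<Rightarrow> 'b" where
  "gwa_mon x y n = (if n \<ge> 0 then x ^ nat n else y ^ nat (- n))"

text \<open>(B, iota, x, y) is (a copy of) the generalized Weyl algebra D(sigma, a):
  B is a k-algebra containing D via the embedding iota, generated by iota(D), x, y
  subject to the defining relations, and with no further relations, i.e. the
  standard monomials are left-linearly independent over D.\<close>
definition is_GWA :: "('k::field \<Rightarrow> 'd::comm_ring_1 \<Rightarrow> 'd) \<Rightarrow> ('d \<Rightarrow> 'd) \<Rightarrow> 'd
     \<Rightarrow> ('k \<Rightarrow> 'b::ring_1 \<Rightarrow> 'b) \<Rightarrow> ('d \<Rightarrow> 'b) \<Rightarrow> 'b \<Rightarrow> 'b \<Rightarrow> bool" where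
  "is_GWA sD \<sigma> a sB \<iota> x y \<longleftrightarrow>
     is_k_algebra sB \<and> k_alg_hom sD sB \<iota> \<and> inj \<iota> \<and>
     (\<forall>d. x * \<iota> d = \<iota> (\<sigma> d) * x) \<and>
     (\<forall>d. y * \<iota> d = \<iota> (inv \<sigma> d) * y) \<and>
     y * x = \<iota> a \<and> x * y = \<iota> (\<sigma> a) \<and>
     generates sB (range \<iota> \<union> {x, y}) \<and>
     (\<forall>F f. finite F \<and> (\<Sum>n\<in>F. \<iota> (f n) * gwa_mon x y n) = 0 \<longrightarrow> (\<forall>n\<in>F. f n = 0))"

end

theory Submission
  imports Defs "HOL-Real_Asymp.Real_Asymp"
begin

locale kalg = vector_space s for s :: "'k::field \<Rightarrow> 'b::ring_1 \<Rightarrow> 'b" +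
  assumes cl: "s c (u * v) = s c u * v" and cr: "s c (u * v) = u * s c v"
begin

lemma subspace_pre:
  assumes "subspace S" and add: "\<And>x y. f (x + y) = f x + f y"
    and sc: "\<And>c x. f (s c x) = s c (f x)"
  shows "subspace {x. f x \<in> S}"
proof -
  have f0: "f 0 = 0" using add[of 0 0] by simp
  have S: "0 \<in> S" "\<And>x y. x \<in> S \<Longrightarrow> y \<in> S \<Longrightarrow> x + y \<in> S" "\<And>c x. x \<in> S \<Longrightarrow> s c x \<in> S"
    using assms(1) subspace_0 subspace_add subspace_scale by blast+
  show ?thesis unfolding subspace_def by (simp add: f0 add sc S)
qed

lemma mult_span:
  assumes p: "p \<in> span P" and q: "q \<in> span Q"
  shows "p * q \<in> span {a * b | a b. a \<in> P \<and> b \<in> Q}"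
proof -
  let ?X = "span {a * b | a b. a \<in> P \<and> b \<in> Q}"
  have 1: "a * q \<in> ?X" if a: "a \<in> P" for a
  proof -
    have "subspace {q. a * q \<in> ?X}"
      by (rule subspace_pre) (auto simp: distrib_left cr[symmetric])
    moreover have "b \<in> {q. a * q \<in> ?X}" if "b \<in> Q" for b
      using a that by (auto intro!: span_base)
    ultimately show ?thesis using q span_subspace_induct by blast
  qed
  have "subspace {p. p * q \<in> ?X}"
    by (rule subspace_pre) (auto simp: distrib_right cl[symmetric])
  then show ?thesis using 1 p span_subspace_induct by blast
qed

lemma subspace_pow: "subspace (sub_pow s W m)"
  by (cases m) (auto simp: sub_prod_def)

lemma one_pow0: "1 \<in> sub_pow s W 0"
  by (auto intro: span_base)

lemma prod_in_pow: "p \<in> sub_pow s W m \<Longrightarrow> q \<in> W \<Longrightarrow> p * q \<in> sub_pow s W (Suc m)"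
  by (auto simp: sub_prod_def intro!: span_base)

lemma pow_mult:
  "q \<in> sub_pow s W b \<Longrightarrow> p \<in> sub_pow s W a \<Longrightarrow> p * q \<in> sub_pow s W (a + b)"
proof (induction b arbitrary: q)
  case 0
  have sub: "subspace {q. p * q \<in> sub_pow s W a}"
    by (rule subspace_pre[OF subspace_pow]) (auto simp: distrib_left cr[symmetric])
  have "q \<in> {q. p * q \<in> sub_pow s W a}"
    by (rule span_subspace_induct[of q "{1}"]) (use 0 sub in auto)
  then show ?case by simp
next
  case (Suc b)
  have sub: "subspace {q. p * q \<in> sub_pow s W (a + Suc b)}"
    by (rule subspace_pre[OF subspace_pow]) (auto simp: distrib_left cr[symmetric])
  have gen: "r * v \<in> {q. p * q \<in> sub_pow s W (a + Suc b)}"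
    if "r \<in> sub_pow s W b" "v \<in> W" for r v
    using Suc.IH[OF that(1) Suc.prems(2)] prod_in_pow[OF _ that(2)]
    by (simp add: mult.assoc[symmetric])
  have "q \<in> {q. p * q \<in> sub_pow s W (a + Suc b)}"
    by (rule span_subspace_induct[of q "{v * w |v w. v \<in> sub_pow s W b \<and> w \<in> W}"])
      (use Suc.prems(1) sub gen in \<open>auto simp: sub_prod_def\<close>)
  then show ?case by simp
qed

lemma pow_mono: "W \<subseteq> W' \<Longrightarrow> sub_pow s W m \<subseteq> sub_pow s W' m"
proof (induction m)
  case (Suc m)
  then show ?case unfolding sub_pow.simps sub_prod_def
    by (intro span_mono) blast
qed simp

lemma pow_fin:
  assumes fF: "finite F" and WF: "W \<subseteq> span F"
  shows "\<exists>G. finite G \<and> sub_pow s W m \<subseteq> span G"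
proof (induction m)
  case 0
  have "sub_pow s W 0 \<subseteq> span {1}" by simp
  then show ?case by (intro exI[of _ "{1}"] conjI) simp_all
next
  case (Suc m)
  then obtain G where G: "finite G" "sub_pow s W m \<subseteq> span G" by blast
  define X where "X = {a * b | a b. a \<in> G \<and> b \<in> F}"
  have gen: "v * w \<in> span X" if "v \<in> sub_pow s W m" "w \<in> W" for v w
  proof -
    have "v \<in> span G" using that(1) G(2) by (rule subsetD[rotated])
    moreover have "w \<in> span F" using that(2) WF by (rule subsetD[rotated])
    ultimately show ?thesis unfolding X_def by (rule mult_span)
  qed
  have "sub_pow s W (Suc m) \<subseteq> span X"
    unfolding sub_pow.simps sub_prod_def
  proof (rule span_minimal)
    show "{v * w |v w. v \<in> sub_pow s W m \<and> w \<in> W} \<subseteq> span X"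
      using gen by blast
  qed (rule subspace_span)
  moreover have "X \<subseteq> (\<lambda>p. fst p * snd p) ` (G \<times> F)"
    unfolding X_def by force
  then have "finite X"
    by (rule finite_subset) (intro finite_imageI finite_cartesian_product G(1) fF)
  ultimately show ?case by blast
qed

lemma powsum_fin:
  assumes "finite F" "W \<subseteq> span F"
  shows "\<exists>G. finite G \<and> sub_pow_sum s W n \<subseteq> span G"
proof -
  have "\<exists>G. finite G \<and> (\<forall>i\<le>n. sub_pow s W i \<subseteq> span G)"
  proof (induction n)
    case 0
    obtain H where H: "finite H" "sub_pow s W 0 \<subseteq> span H" using pow_fin[OF assms] by blast
    then show ?case by (intro exI[of _ H]) simp
  next
    case (Suc n)
    then obtain G where G: "finite G" "\<forall>i\<le>n. sub_pow s W i \<subseteq> span G" by blast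
    obtain H where H: "finite H" "sub_pow s W (Suc n) \<subseteq> span H" using pow_fin[OF assms] by blast
    have sG: "span G \<subseteq> span (G \<union> H)" and sH: "span H \<subseteq> span (G \<union> H)"
      by (rule span_mono; blast)+
    have "\<forall>i\<le>Suc n. sub_pow s W i \<subseteq> span (G \<union> H)"
    proof (intro allI impI)
      fix i assume "i \<le> Suc n"
      then consider "i \<le> n" | "i = Suc n" by linarith
      then show "sub_pow s W i \<subseteq> span (G \<union> H)"
      proof cases
        case 1 then show ?thesis using G(2) sG by blast
      next
        case 2 then show ?thesis using H(2) sH by blast
      qed
    qed
    moreover have "finite (G \<union> H)" using G(1) H(1) by simp
    ultimately show ?case by blast
  qed
  then obtain G where G: "finite G" "\<forall>i\<le>n. sub_pow s W i \<subseteq> span G" by blast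
  have "sub_pow_sum s W n \<subseteq> span G"
    unfolding sub_pow_sum_def
  proof (rule span_minimal)
    show "(\<Union>i\<in>{0..n}. sub_pow s W i) \<subseteq> span G" using G(2) by auto
  qed (rule subspace_span)
  then show ?thesis using G by blast
qed

lemma indep_le_dim:
  assumes "finite G" "W \<subseteq> span G" "S \<subseteq> W" "independent S"
  shows "card S \<le> dim W"
proof -
  obtain B where B: "B \<subseteq> W" "independent B" "W \<subseteq> span B" "card B = dim W"
    using basis_exists by blast
  have "finite B" using independent_span_bound[OF assms(1) B(2)] B(1) assms(2) by auto
  then show ?thesis using independent_span_bound[OF \<open>finite B\<close> assms(4)] B assms(3) by auto
qed

lemma dim_strict:
  assumes "finite F" "finite G" "span F \<subseteq> span G" "span F \<noteq> span G"
  shows "dim (span F) < dim (span G)"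
proof -
  obtain B where B: "B \<subseteq> span F" "independent B" "span F \<subseteq> span B" "card B = dim (span F)"
    using basis_exists by blast
  have fB: "finite B" using independent_span_bound[OF assms(1) B(2)] B(1) by auto
  obtain w where w: "w \<in> span G" "w \<notin> span F" using assms(3,4) by blast
  have wB: "w \<notin> span B" using w B(1) span_minimal[OF B(1)] span_span
    by (metis span_mono subsetD)
  have "independent (insert w B)" by (rule independent_insertI[OF wB B(2)])
  moreover have "insert w B \<subseteq> span G" using w B(1) assms(3) by auto
  ultimately have "card (insert w B) \<le> dim (span G)"
    using indep_le_dim[OF assms(2), of "span G"] by auto
  moreover have "card (insert w B) = Suc (card B)"
    using fB wB span_superset[of B] by (auto simp: card_insert_if)
  ultimately show ?thesis using B(4) by simp
qed

end

locale ckalg = kalg s for s :: "'k::field \<Rightarrow> 'b::comm_ring_1 \<Rightarrow> 'b"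
begin

lemma mix:
  fixes T :: "nat \<Rightarrow> 'b set" and A B :: "'b set"
  assumes Tsub: "\<And>K. subspace (T K)"
    and HB: "\<And>K w b. w \<in> T K \<Longrightarrow> b \<in> B \<Longrightarrow> w * b \<in> T (Suc K)"
  shows "u \<in> sub_pow s (span (A \<union> B)) M \<Longrightarrow>
     (\<forall>M' u'. u' \<in> sub_pow s A M' \<longrightarrow> w * u' \<in> T (N + M')) \<Longrightarrow> w * u \<in> T (N + M)"
proof -
  define Rp where "Rp = (\<lambda>N w. \<forall>M' u'. u' \<in> sub_pow s A M' \<longrightarrow> w * u' \<in> T (N + M'))"
  define Q where "Q = (\<lambda>M. {u. \<forall>N w. Rp N w \<longrightarrow> w * u \<in> T (N + M)})"
  have Qsub: "subspace (Q M)" for M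
  proof -
    have eq: "Q M = (\<Inter>p\<in>{(N,w). Rp N w}. {u. snd p * u \<in> T (fst p + M)})"
      unfolding Q_def by (rule set_eqI) auto
    have "subspace {u. snd p * u \<in> T (fst p + M)}" for p
      by (rule subspace_pre[OF Tsub]) (simp_all add: distrib_left cr[symmetric])
    then show ?thesis unfolding eq by (intro subspace_Int)
  qed
  have "sub_pow s (span (A \<union> B)) M \<subseteq> Q M"
  proof (induction M)
    case 0
    have "1 \<in> Q 0" unfolding Q_def
    proof (intro CollectI allI impI)
      fix N w assume "Rp N w"
      then have "w * 1 \<in> T (N + 0)" unfolding Rp_def using one_pow0[of A] by blast
      then show "w * 1 \<in> T (N + 0)" .
    qed
    then show ?case using span_minimal[OF _ Qsub, of "{1}" 0] by simp
  next
    case (Suc M)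
    have "p * q \<in> Q (Suc M)" if p: "p \<in> sub_pow s (span (A \<union> B)) M" and q: "q \<in> span (A \<union> B)" for p q
    proof -
      have pQ: "p \<in> Q M" using Suc p by blast
      have sub: "subspace {q. p * q \<in> Q (Suc M)}"
        by (rule subspace_pre[OF Qsub]) (auto simp: distrib_left cr[symmetric])
      have "g \<in> {q. p * q \<in> Q (Suc M)}" if g: "g \<in> A \<union> B" for g
      proof (cases "g \<in> A")
        case True
        have "w * (p * g) \<in> T (N + Suc M)" if R: "Rp N w" for N w
        proof -
          have "Rp (Suc N) (w * g)" unfolding Rp_def
          proof (intro allI impI)
            fix M' u' assume "u' \<in> sub_pow s A M'"
            then have "u' * g \<in> sub_pow s A (Suc M')" using prod_in_pow True by blast
            then have "w * (u' * g) \<in> T (N + Suc M')" using R unfolding Rp_def by blast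
            then show "w * g * u' \<in> T (Suc N + M')" by (simp add: ac_simps)
          qed
          then have "w * g * p \<in> T (Suc N + M)" using pQ unfolding Q_def by blast
          then show ?thesis by (simp add: ac_simps)
        qed
        then show ?thesis unfolding Q_def by auto
      next
        case False
        then have gB: "g \<in> B" using g by blast
        have "w * (p * g) \<in> T (N + Suc M)" if R: "Rp N w" for N w
        proof -
          have "w * p \<in> T (N + M)" using pQ R unfolding Q_def by blast
          then have "w * p * g \<in> T (Suc (N + M))" using HB gB by blast
          then show ?thesis by (simp add: ac_simps)
        qed
        then show ?thesis unfolding Q_def by auto
      qed
      then show ?thesis using span_subspace_induct[OF q sub] by blast
    qed
    then show ?case unfolding sub_pow.simps sub_prod_def
      by (intro span_minimal[OF _ Qsub]) blast
  qed
  then show "u \<in> sub_pow s (span (A \<union> B)) M \<Longrightarrow>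
     (\<forall>M' u'. u' \<in> sub_pow s A M' \<longrightarrow> w * u' \<in> T (N + M')) \<Longrightarrow> w * u \<in> T (N + M)"
    unfolding Q_def Rp_def by blast
qed

end

lemma kalgI: "is_k_algebra s \<Longrightarrow> kalg s"
  unfolding is_k_algebra_def by (intro kalg.intro kalg_axioms.intro; blast)


lemma ckalgI: "is_k_algebra (s :: 'k::field \<Rightarrow> 'b::comm_ring_1 \<Rightarrow> 'b) \<Longrightarrow> ckalg s"
  unfolding ckalg_def by (rule kalgI)

lemma lim_g:
  fixes c d :: real assumes "c > 0"
  shows "(\<lambda>n::nat. log (real (3*n)) (c * real n powr (d+2))) \<longlonglongrightarrow> d + 2"
  using assms by real_asymp

lemma asym:
  fixes c d :: real and f :: "nat \<Rightarrow> nat"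
  assumes c: "c > 0" and fb: "\<And>n. n \<ge> 1 \<Longrightarrow> real (f (3*n)) \<ge> c * real n powr (d+2)"
  shows "limsup (\<lambda>m. ereal (log (real m) (real (f m)))) \<ge> ereal (d+2)"
proof -
  let ?X = "\<lambda>m. ereal (log (real m) (real (f m)))"
  let ?g = "\<lambda>n::nat. ereal (log (real (3*n)) (c * real n powr (d+2)))"
  have sm: "strict_mono (\<lambda>n::nat. 3*n)" by (auto simp: strict_mono_def)
  have "limsup ?g = ereal (d+2)"
    apply (rule lim_imp_Limsup) apply simp
    using lim_g[OF c, of d] by (simp add: tendsto_ereal)
  moreover have "limsup ?g \<le> limsup (?X \<circ> (\<lambda>n. 3*n))"
  proof (rule Limsup_mono)
    show "\<forall>\<^sub>F n in sequentially. ?g n \<le> (?X \<circ> (\<lambda>n. 3*n)) n"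
      using eventually_ge_at_top[of "1::nat"]
    proof eventually_elim
      case (elim n)
      have p: "c * real n powr (d+2) > 0" using c elim by simp
      have "log (real (3*n)) (c * real n powr (d+2)) \<le> log (real (3*n)) (real (f (3*n)))"
        using fb[OF elim] p elim by (subst log_le_cancel_iff) auto
      then show ?case by simp
    qed
  qed
  moreover have "limsup (?X \<circ> (\<lambda>n. 3*n)) \<le> limsup ?X" by (rule limsup_subseq_mono[OF sm])
  ultimately show ?thesis by simp
qed

lemma funpow_comm:
  assumes "\<And>d. x * \<iota> d = \<iota> (\<sigma> d) * x"
  shows "x ^ j * \<iota> d = \<iota> ((\<sigma> ^^ j) d) * (x::'b::ring_1) ^ j"
proof (induction j arbitrary: d)
  case 0 then show ?case by simp
next
  case (Suc j)
  have "x ^ Suc j * \<iota> d = x ^ j * (x * \<iota> d)" by (metis power_Suc2 mult.assoc)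
  also have "\<dots> = x ^ j * \<iota> (\<sigma> d) * x" by (simp add: assms mult.assoc)
  also have "\<dots> = \<iota> ((\<sigma> ^^ j) (\<sigma> d)) * (x ^ j * x)" by (simp add: Suc mult.assoc)
  also have "\<dots> = \<iota> ((\<sigma> ^^ j) (\<sigma> d)) * x ^ Suc j" by (simp only: power_Suc2)
  finally show ?case by (simp only: funpow_Suc_right comp_apply)
qed

theorem lemma2p3:
  fixes sD :: "'k::field \<Rightarrow> 'd::comm_ring_1 \<Rightarrow> 'd"
    and sB :: "'k \<Rightarrow> 'b::ring_1 \<Rightarrow> 'b"
    and \<sigma> :: "'d \<Rightarrow> 'd" and a :: 'd
    and \<iota> :: "'d \<Rightarrow> 'b" and x y :: 'b
  assumes "is_k_algebra sD"
    and "sensitive_multiplicity sD"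
    and "k_alg_automorphism sD \<sigma>"
    and "\<not> locally_algebraic sD \<sigma>"
    and "is_GWA sD \<sigma> a sB \<iota> x y"
  shows "GKdim sB \<ge> GKdim sD + 2"
proof -
  have kB: "is_k_algebra sB" and hi: "k_alg_hom sD sB \<iota>"
    and xc: "\<And>d. x * \<iota> d = \<iota> (\<sigma> d) * x"
    and gwa: "\<And>F f. finite F \<Longrightarrow> (\<Sum>n\<in>F. \<iota> (f n) * gwa_mon x y n) = 0 \<Longrightarrow> \<forall>n\<in>F. f n = 0"
    using assms(5) unfolding is_GWA_def by blast+
  interpret D: ckalg sD by (rule ckalgI[OF assms(1)])
  interpret B: kalg sB by (rule kalgI[OF kB])
  have ilin: "Vector_Spaces.linear sD sB \<iota>" and imul: "\<And>u v. \<iota> (u * v) = \<iota> u * \<iota> v"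
    and i1: "\<iota> 1 = 1"
    using hi unfolding k_alg_hom_def by blast+
  have iadd: "\<And>u v. \<iota> (u + v) = \<iota> u + \<iota> v" and isc: "\<And>c u. \<iota> (sD c u) = sB c (\<iota> u)"
    using ilin unfolding Vector_Spaces.linear_iff by simp_all
  have i0: "\<iota> 0 = 0" using iadd[of 0 0] by simp
  have slin: "Vector_Spaces.linear sD sD \<sigma>"
    using assms(3) unfolding k_alg_automorphism_def k_alg_hom_def by blast
  have simg: "\<sigma> ` D.span X = D.span (\<sigma> ` X)" for X
    using module_hom.span_image[of sD sD \<sigma> X] slin by (simp add: module_hom_iff_linear)
  obtain d V0 c where Gd: "GKdim sD = ereal d" and SM: "SM sD V0 c d"
    using assms(2) unfolding sensitive_multiplicity_def by blast
  have SMc: "fd_subspace sD V0 \<and> c > 0 \<and>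
    (\<forall>W r. fd_subspace sD W \<and> regular_elem r \<and> {v * r | v. v \<in> V0} \<subseteq> W \<longrightarrow>
        (\<forall>m::nat. real (D.dim (sub_pow sD W m)) \<ge> c * real (D.dim W) * real m powr d))"
    using SM unfolding SM_def .
  have SMu1: "fd_subspace sD V0" using SMc by (rule conjunct1)
  have cpos: "c > 0" using SMc[THEN conjunct2] by (rule conjunct1)
  note SMu3 = SMc[THEN conjunct2, THEN conjunct2]
  have SMp: "real (D.dim (sub_pow sD W m)) \<ge> c * real (D.dim W) * real m powr d"
    if "fd_subspace sD W" "regular_elem r" "{v * r | v. v \<in> V0} \<subseteq> W" for W r m
    using SMu3[rule_format, OF conjI[OF that(1) conjI[OF that(2) that(3)]]] .
  obtain BV0 where BV0: "finite BV0" "V0 = D.span BV0"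
    using SMu1 unfolding fd_subspace_def by blast
  have exV: "\<exists>V. fd_subspace sD V \<and> (\<forall>W. \<not> (fd_subspace sD W \<and> V \<subseteq> W \<and> \<sigma> ` W \<subseteq> W))"
    using assms(4) unfolding locally_algebraic_def not_all not_imp not_ex .
  define V1 where "V1 = (SOME V. fd_subspace sD V \<and> (\<forall>W. \<not> (fd_subspace sD W \<and> V \<subseteq> W \<and> \<sigma> ` W \<subseteq> W)))"
  have V1P: "fd_subspace sD V1 \<and> (\<forall>W. \<not> (fd_subspace sD W \<and> V1 \<subseteq> W \<and> \<sigma> ` W \<subseteq> W))"
    unfolding V1_def by (rule someI_ex[OF exV])
  have V1: "fd_subspace sD V1" using V1P by (rule conjunct1)
  have V1bad: "\<not> \<sigma> ` W \<subseteq> W" if "fd_subspace sD W" "V1 \<subseteq> W" for W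
  proof
    assume "\<sigma> ` W \<subseteq> W"
    then have 1: "fd_subspace sD W \<and> V1 \<subseteq> W \<and> \<sigma> ` W \<subseteq> W" using that by (intro conjI)
    have 2: "\<not> (fd_subspace sD W \<and> V1 \<subseteq> W \<and> \<sigma> ` W \<subseteq> W)" using V1P[THEN conjunct2] by (rule spec)
    show False using 2 1 by (rule notE)
  qed
  obtain BV1 where BV1: "finite BV1" "V1 = D.span BV1" using V1 unfolding fd_subspace_def by blast
  define BV where "BV = BV0 \<union> BV1"
  have fBV: "finite BV" using BV0 BV1 BV_def by simp
  define VB where "VB = B.span (\<iota> ` BV \<union> {x})"
  have fVB: "finite (\<iota> ` BV \<union> {x})" using fBV by simp
  have VBfd: "fd_subspace sB VB" unfolding fd_subspace_def VB_def using fVB by blast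
  have xVB: "x \<in> VB" unfolding VB_def by (auto intro: B.span_base)
  have iVB: "v \<in> BV \<Longrightarrow> \<iota> v \<in> VB" for v unfolding VB_def by (auto intro: B.span_base)
  define Uf where "Uf j = D.span (\<Union>l<j. (\<sigma> ^^ l) ` BV)" for j
  have Uffin: "finite (\<Union>l<j. (\<sigma> ^^ l) ` BV)" for j using fBV by simp
  have U1: "Uf j \<subseteq> Uf (Suc j)" for j unfolding Uf_def
    by (rule D.span_mono) (auto simp: lessThan_Suc)
  have U2: "\<sigma> ` Uf j \<subseteq> Uf (Suc j)" for j
  proof -
    have "\<sigma> ` (\<Union>l<j. (\<sigma> ^^ l) ` BV) \<subseteq> (\<Union>l<Suc j. (\<sigma> ^^ l) ` BV)"
    proof
      fix z assume "z \<in> \<sigma> ` (\<Union>l<j. (\<sigma> ^^ l) ` BV)"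
      then obtain l v where "l < j" "v \<in> BV" "z = \<sigma> ((\<sigma> ^^ l) v)" by blast
      then have "z \<in> (\<sigma> ^^ Suc l) ` BV" "Suc l \<in> {..<Suc j}" by auto
      then show "z \<in> (\<Union>l<Suc j. (\<sigma> ^^ l) ` BV)" by blast
    qed
    then show ?thesis unfolding Uf_def simg by (rule D.span_mono)
  qed
  have U3: "D.span BV \<subseteq> Uf j" if "j \<ge> 1" for j unfolding Uf_def
    by (rule D.span_mono) (use that in \<open>auto intro!: UN_I[of 0]\<close>)
  have U4: "Uf j \<noteq> Uf (Suc j)" for j
  proof
    assume eq: "Uf j = Uf (Suc j)"
    have "fd_subspace sD (Uf j)" unfolding fd_subspace_def Uf_def using Uffin by blast
    moreover have "V1 \<subseteq> Uf j" using eq U3[of "Suc j"] BV1(2) D.span_mono[of BV1 BV] BV_def by auto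
    moreover have "\<sigma> ` Uf j \<subseteq> Uf j" using U2[of j] unfolding eq[symmetric] .
    ultimately show False using V1bad by blast
  qed
  have U5: "D.dim (Uf j) \<ge> j" for j
  proof (induction j)
    case (Suc j)
    have "D.dim (Uf j) < D.dim (Uf (Suc j))"
      unfolding Uf_def apply (rule D.dim_strict[OF Uffin Uffin])
      using U1 U4 unfolding Uf_def by auto
    then show ?case using Suc by simp
  qed simp
  have U6: "Uf (Suc j) \<subseteq> D.span (Uf j \<union> (\<sigma> ^^ j) ` BV)" for j
    unfolding Uf_def
    by (rule D.span_mono) (auto simp: lessThan_Suc intro: D.span_base)
  have idiff: "\<iota> (u - v) = \<iota> u - \<iota> v" for u v
    using iadd[of "u - v" v] by (simp add: eq_diff_eq)
  have ineg: "\<iota> (- u) = - \<iota> u" for u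
    using idiff[of 0 u] i0 by simp
  have isum: "\<iota> (\<Sum>b\<in>Z. g b) = (\<Sum>b\<in>Z. \<iota> (g b))" for Z and g :: "'d \<Rightarrow> 'd"
    using module_hom.sum[of sD sB \<iota> g Z] ilin by (simp add: module_hom_iff_linear)
  have xpow: "x ^ j * \<iota> d = \<iota> ((\<sigma> ^^ j) d) * x ^ j" for j d
    by (rule funpow_comm) (rule xc)
  define L where "L j M = {u. \<iota> u * x ^ j \<in> sub_pow sB VB (M + j)}" for j M
  have L0: "D.subspace (L j M)" for j M
  proof -
    have S: "B.subspace (sub_pow sB VB (M + j))" by (rule B.subspace_pow)
    show ?thesis unfolding D.subspace_def L_def
      using B.subspace_0[OF S] B.subspace_add[OF S] B.subspace_scale[OF S]
      by (simp add: i0 iadd isc distrib_right B.cl[symmetric])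
  qed
  have L1: "L j M \<subseteq> L (Suc j) M" for j M
  proof
    fix u assume "u \<in> L j M"
    then have "\<iota> u * x ^ j * x \<in> sub_pow sB VB (Suc (M + j))"
      using B.prod_in_pow xVB unfolding L_def by blast
    moreover have "\<iota> u * x ^ j * x = \<iota> u * x ^ Suc j" by (metis power_Suc2 mult.assoc)
    ultimately show "u \<in> L (Suc j) M" unfolding L_def by simp
  qed
  have Lmono: "L j M \<subseteq> L l M" if "j \<le> l" for j l M
    using lift_Suc_mono_le[of "\<lambda>j. L j M", OF L1 that] .
  have L2: "u * (\<sigma> ^^ j) v \<in> L j (Suc K)" if "u \<in> L j K" "v \<in> BV" for u j K v
  proof -
    have "\<iota> (u * (\<sigma> ^^ j) v) * x ^ j = \<iota> u * (\<iota> ((\<sigma> ^^ j) v) * x ^ j)"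
      by (simp add: imul mult.assoc)
    also have "\<dots> = \<iota> u * x ^ j * \<iota> v" by (simp add: xpow mult.assoc)
    finally have "\<iota> (u * (\<sigma> ^^ j) v) * x ^ j = \<iota> u * x ^ j * \<iota> v" .
    moreover have "\<iota> u * x ^ j * \<iota> v \<in> sub_pow sB VB (Suc (K + j))"
      using B.prod_in_pow iVB[OF that(2)] that(1) unfolding L_def by blast
    ultimately show ?thesis unfolding L_def by simp
  qed
  have L3: "1 \<in> L 0 0" unfolding L_def using B.one_pow0[of VB] by (simp add: i1)
  have E: "sub_pow sD (Uf j) M \<subseteq> L j M" for j M
  proof (induction j arbitrary: M)
    case 0
    have R: "\<forall>M' u'. u' \<in> sub_pow sD {} M' \<longrightarrow> 1 * u' \<in> L 0 (0 + M')"
    proof (intro allI impI)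
      fix M' u' assume h: "u' \<in> sub_pow sD {} M'"
      show "1 * u' \<in> L 0 (0 + M')"
      proof (cases M')
        case 0
        have "D.span {1} \<subseteq> L 0 0" using L3 L0 by (intro D.span_minimal) auto
        then show ?thesis using h 0 by auto
      next
        case (Suc m) then have "u' = 0" using h by (simp add: sub_prod_def)
        then show ?thesis using D.subspace_0[OF L0] by simp
      qed
    qed
    have HB: "\<And>K w b. w \<in> L 0 K \<Longrightarrow> b \<in> {} \<Longrightarrow> w * b \<in> L 0 (Suc K)" by simp
    have "Uf 0 = D.span ({} \<union> {})" unfolding Uf_def by simp
    then show ?case
      using D.mix[where T="L 0" and A="{}" and B="{}" and w=1 and N=0, OF L0 HB] R by auto
  next
    case (Suc j)
    have R: "\<forall>M' u'. u' \<in> sub_pow sD (Uf j) M' \<longrightarrow> 1 * u' \<in> L j (0 + M')" using Suc.IH by auto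
    have HB: "\<And>K w b. w \<in> L j K \<Longrightarrow> b \<in> (\<sigma> ^^ j) ` BV \<Longrightarrow> w * b \<in> L j (Suc K)"
      using L2 by blast
    have "sub_pow sD (D.span (Uf j \<union> (\<sigma> ^^ j) ` BV)) M \<subseteq> L j M"
      using D.mix[where T="L j" and A="Uf j" and B="(\<sigma> ^^ j) ` BV" and w=1 and N=0, OF L0 HB] R
      by auto
    then show ?case using D.pow_mono[OF U6[of j], of M] L1[of j M] by blast
  qed
  have gx: "\<forall>l\<in>J. h l = 0" if fJ: "finite J" and s0: "(\<Sum>l\<in>J. \<iota> (h l) * x ^ l) = 0" for J h
  proof -
    have "(\<Sum>k\<in>int ` J. \<iota> (h (nat k)) * gwa_mon x y k) = (\<Sum>l\<in>J. \<iota> (h l) * x ^ l)"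
      by (subst sum.reindex) (auto simp: gwa_mon_def inj_on_def)
    then have "\<forall>k\<in>int ` J. h (nat k) = 0" using gwa[of "int ` J" "\<lambda>k. h (nat k)"] fJ s0 by auto
    then show ?thesis by auto
  qed
  have bound: "real (B.dim (sub_pow_sum sB VB (3*n))) \<ge> c * real n powr (d+2)" if n1: "n \<ge> 1" for n
  proof -
    define W where "W = Uf n"
    have Wfd: "fd_subspace sD W" unfolding fd_subspace_def W_def Uf_def using Uffin by blast
    have reg: "regular_elem (1::'d)" unfolding regular_elem_def by simp
    have "V0 \<subseteq> W" using U3[OF n1] BV0(2) D.span_mono[of BV0 BV] BV_def W_def by auto
    then have V0W: "{v * 1 | v. v \<in> V0} \<subseteq> W" by auto
    define P where "P = sub_pow sD W n"
    have dimP: "real (D.dim P) \<ge> c * real n * real n powr d"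
    proof -
      have "real (D.dim P) \<ge> c * real (D.dim W) * real n powr d" using SMp[OF Wfd reg V0W] P_def by blast
      moreover have "c * real n * real n powr d \<le> c * real (D.dim W) * real n powr d"
        using U5[of n] cpos W_def by (intro mult_right_mono mult_left_mono) auto
      ultimately show ?thesis by linarith
    qed
    have pos: "c * real n * real n powr d > 0" using cpos n1 by simp
    obtain Bs where Bs: "Bs \<subseteq> P" "D.independent Bs" "P \<subseteq> D.span Bs" "card Bs = D.dim P"
      using D.basis_exists by blast
    have fBs: "finite Bs"
    proof (rule ccontr)
      assume "infinite Bs" then have "D.dim P = 0" using Bs(4) by simp
      then show False using dimP pos by simp
    qed
    have PL: "P \<subseteq> L l n" if "n \<le> l" for l using E[of n n] Lmono[OF that] P_def W_def by blast
    define I where "I = {n..2*n}"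
    define mp where "mp = (\<lambda>p. \<iota> (fst p) * x ^ (snd p))"
    define S where "S = mp ` (Bs \<times> I)"
    have fI: "finite I" unfolding I_def by simp
    have inj: "inj_on mp (Bs \<times> I)"
    proof (rule inj_onI, clarify)
      fix b l b' l' assume b: "b \<in> Bs" "l \<in> I" "b' \<in> Bs" "l' \<in> I" and eq: "mp (b,l) = mp (b',l')"
      have nz: "b \<noteq> 0" "b' \<noteq> 0" using b Bs(2) D.dependent_zero by blast+
      show "b = b' \<and> l = l'"
      proof (cases "l = l'")
        case True
        have "(\<Sum>k\<in>{l}. \<iota> ((\<lambda>k. b - b') k) * x ^ k) = 0"
          using eq True by (simp add: mp_def idiff left_diff_distrib)
        then show ?thesis using gx[of "{l}" "\<lambda>k. b - b'"] True by auto
      next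
        case False
        let ?h = "\<lambda>k. if k = l then b else - b'"
        have "(\<Sum>k\<in>{l,l'}. \<iota> (?h k) * x ^ k) = \<iota> b * x ^ l - \<iota> b' * x ^ l'"
          using False by (simp add: ineg)
        also have "\<dots> = 0" using eq by (simp add: mp_def)
        finally have "?h l = 0" using gx[of "{l,l'}" ?h] by auto
        then show ?thesis using nz by simp
      qed
    qed
    have cardS: "card S = card Bs * card I" unfolding S_def
      using card_image[OF inj] card_cartesian_product by simp
    have fS: "finite S" unfolding S_def using fBs fI by simp
    have Ssub: "S \<subseteq> sub_pow_sum sB VB (3*n)"
    proof
      fix t assume "t \<in> S"
      then obtain b l where t: "t = \<iota> b * x ^ l" "b \<in> Bs" "l \<in> I" unfolding S_def mp_def by auto
      have "b \<in> L l n" using PL[of l] Bs(1) t(2,3) I_def by auto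
      then have "t \<in> sub_pow sB VB (n + l)" unfolding L_def t(1) by simp
      moreover have "n + l \<in> {0..3*n}" using t(3) I_def by auto
      ultimately show "t \<in> sub_pow_sum sB VB (3*n)" unfolding sub_pow_sum_def
        by (intro B.span_base) blast
    qed
    have indS: "B.independent S"
    proof (rule B.independent_if_scalars_zero[OF fS])
      fix f t assume s0: "(\<Sum>t\<in>S. sB (f t) t) = 0" and tS: "t \<in> S"
      have "(\<Sum>t\<in>S. sB (f t) t) = (\<Sum>p\<in>Bs \<times> I. sB (f (mp p)) (mp p))"
        unfolding S_def by (subst sum.reindex[OF inj]) simp
      also have "\<dots> = (\<Sum>b\<in>Bs. \<Sum>l\<in>I. sB (f (mp (b,l))) (mp (b,l)))"
        by (simp add: sum.cartesian_product)
      also have "\<dots> = (\<Sum>l\<in>I. \<Sum>b\<in>Bs. sB (f (mp (b,l))) (mp (b,l)))"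
        by (rule sum.swap)
      also have "\<dots> = (\<Sum>l\<in>I. \<iota> (\<Sum>b\<in>Bs. sD (f (mp (b,l))) b) * x ^ l)"
        by (simp add: isum isc sum_distrib_right mp_def B.cl)
      finally have hyp: "\<forall>l\<in>I. (\<Sum>b\<in>Bs. sD (f (mp (b,l))) b) = 0"
        using gx[OF fI] s0 by simp
      have "f (mp (b,l)) = 0" if "l \<in> I" "b \<in> Bs" for l b
      proof -
        have "(\<Sum>b\<in>Bs. sD (f (mp (b,l))) b) = 0" using hyp that(1) by blast
        then show ?thesis
          using D.independentD[OF Bs(2) fBs order_refl, of "\<lambda>b. f (mp (b,l))" b] that(2) by simp
      qed
      then have "\<forall>l\<in>I. \<forall>b\<in>Bs. f (mp (b,l)) = 0" by blast
      then show "f t = 0" using tS unfolding S_def by auto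
    qed
    obtain G where G: "finite G" "sub_pow_sum sB VB (3*n) \<subseteq> B.span G"
      using B.powsum_fin[OF fVB, of VB] VB_def by auto
    have "card S \<le> B.dim (sub_pow_sum sB VB (3*n))" by (rule B.indep_le_dim[OF G Ssub indS])
    moreover have "card I = n + 1" unfolding I_def by simp
    ultimately have A1: "real (card Bs) * (real n + 1) \<le> real (B.dim (sub_pow_sum sB VB (3*n)))"
      using cardS by (metis of_nat_add of_nat_le_iff of_nat_mult of_nat_1)
    have A2: "c * real n * real n powr d * (real n + 1) \<le> real (card Bs) * (real n + 1)"
      using dimP Bs(4) by (intro mult_right_mono) auto
    have A3: "c * real n powr (d+2) \<le> c * real n * real n powr d * (real n + 1)"
    proof -
      have "real n powr (d+2) = real n powr d * (real n * real n)"
        using n1 by (simp add: powr_add power2_eq_square)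
      moreover have "real n powr d * (real n * real n) \<le> real n * real n powr d * (real n + 1)"
        using n1 by (simp add: algebra_simps)
      ultimately show ?thesis using cpos by (simp add: mult.assoc)
    qed
    show ?thesis using A1 A2 A3 by linarith
  qed
  have "limsup (\<lambda>m. ereal (log (real m) (real (B.dim (sub_pow_sum sB VB m))))) \<ge> ereal (d+2)"
    by (rule asym[OF cpos]) (rule bound)
  moreover have "limsup (\<lambda>m. ereal (log (real m) (real (B.dim (sub_pow_sum sB VB m))))) \<le> GKdim sB"
    unfolding GKdim_def by (rule SUP_upper) (use VBfd in simp)
  ultimately show ?thesis using Gd by simp
qed

end
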